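(* Let $N_1$ and $N_2$ be phylogenetic networks on the same set $S$ of taxa, and assume that either (a) $N_1$ and $N_2$ are both tree-child, or (b) $N_1$ and $N_2$ are both semi-binary, time consistent and tree-sibling. Then $\Upsilon(N_1)=\Upsilon(N_2)$ implies $N_1\cong N_2$. Consequently $m(N_1,N_2)=\frac12|\Upsilon(N_1)\bigtriangleup\Upsilon(N_2)|$ is a metric on the class of tree-child phylogenetic networks on $S$ and on the class of semi-binary time consistent tree-sibling phylogenetic networks on $S$.
   Context: A phylogenetic network on a finite set $S$ of taxa is a finite rooted directed acyclic graph whose leaves (nodes without children) are bijectively labeled by $S$; isomorphism $\cong$ means a digraph isomorphism preserving leaf labels. A tree node has at most one parent; a hybrid node has more than one parent. Two children of a common parent are siblings. $N$ is tree-child if every internal node has a child that is a tree node; tree-sibling if every hybrid node has a sibling that is a tree node; semi-binary if every hybrid node has exactly two parents; time consistent if there is a map $\tau:V\to\mathbb N$ with $\tau(u)<\tau(v)$ for every arc $(u,v)$ with $v$ a tree node and $\tau(u)=\tau(v)$ for every arc $(u,v)$ with $v$ hybrid. The height of a node is the largest length of a path from it to a leaf. The nested label $\ell(v)$ is defined inductively: $\ell(v)=\{i\}$ if $v$ is the leaf labeled $i$, and otherwise $\ell(v)$ is the multiset $\{\ell(v_1),\dots,\ell(v_k)\}$ of nested labels of the children $v_1,\dots,v_k$ of $v$. $\Upsilon(N)$ is the multiset of nested labels of all nodes of $N$; $|\cdot|$ of a multiset is the sum of multiplicities and $\bigtriangleup$ is multiset symmetric difference (multiplicity $|M_1(x)-M_2(x)|$).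 *)

theory Defs
  imports Complex_Main "HOL-Library.Multiset"
begin

record ('v, 's) pnet =
  verts :: "'v set"
  arcs  :: "('v \<times> 'v) set"
  lbl   :: "'v \<Rightarrow> 's"

definition children :: "('v, 's) pnet \<Rightarrow> 'v \<Rightarrow> 'v set" where
  "children N v = {w. (v, w) \<in> arcs N}"

definition parents :: "('v, 's) pnet \<Rightarrow> 'v \<Rightarrow> 'v set" where
  "parents N v = {u. (u, v) \<in> arcs N}"

definition leaves :: "('v, 's) pnet \<Rightarrow> 'v set" where
  "leaves N = {v \<in> verts N. children N v = {}}"

definition tree_node :: "('v, 's) pnet \<Rightarrow> 'v \<Rightarrow> bool" where
  "tree_node N v \<longleftrightarrow> card (parents N v) \<le> 1"

definition hybrid_node :: "('v, 's) pnet \<Rightarrow> 'v \<Rightarrow> bool" where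
  "hybrid_node N v \<longleftrightarrow> card (parents N v) > 1"

definition phylo_net :: "'s set \<Rightarrow> ('v, 's) pnet \<Rightarrow> bool" where
  "phylo_net S N \<longleftrightarrow>
     finite (verts N) \<and>
     arcs N \<subseteq> verts N \<times> verts N \<and>
     (\<forall>v. (v, v) \<notin> (arcs N)\<^sup>+) \<and>
     (\<exists>r \<in> verts N. \<forall>v \<in> verts N. (r, v) \<in> (arcs N)\<^sup>*) \<and>
     bij_betw (lbl N) (leaves N) S"

definition tree_child :: "('v, 's) pnet \<Rightarrow> bool" where
  "tree_child N \<longleftrightarrow>
     (\<forall>v \<in> verts N. v \<notin> leaves N \<longrightarrow> (\<exists>c \<in> children N v. tree_node N c))"

definition tree_sibling :: "('v, 's) pnet \<Rightarrow> bool" where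
  "tree_sibling N \<longleftrightarrow>
     (\<forall>h \<in> verts N. hybrid_node N h \<longrightarrow>
        (\<exists>p t. (p, h) \<in> arcs N \<and> (p, t) \<in> arcs N \<and> t \<noteq> h \<and> tree_node N t))"

definition semi_binary :: "('v, 's) pnet \<Rightarrow> bool" where
  "semi_binary N \<longleftrightarrow> (\<forall>h \<in> verts N. hybrid_node N h \<longrightarrow> card (parents N h) = 2)"

definition time_consistent :: "('v, 's) pnet \<Rightarrow> bool" where
  "time_consistent N \<longleftrightarrow>
     (\<exists>\<tau> :: 'v \<Rightarrow> nat. \<forall>(u, v) \<in> arcs N.
        (tree_node N v \<longrightarrow> \<tau> u < \<tau> v) \<and> (hybrid_node N v \<longrightarrow> \<tau> u = \<tau> v))"

text \<open>Nested labels: a leaf labelled i gets NLeaf i (the label {i}); an internal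
  node gets the multiset of nested labels of its children.\<close>
datatype 's nlabel = NLeaf 's | NNode "'s nlabel multiset"

text \<open>Approximation by recursion depth; on a finite DAG it stabilises once the
  depth exceeds the height of the node, which is less than the number of nodes.\<close>
primrec nl :: "('v, 's) pnet \<Rightarrow> nat \<Rightarrow> 'v \<Rightarrow> 's nlabel" where
  "nl N 0 v = (if children N v = {} then NLeaf (lbl N v) else NNode {#})"
| "nl N (Suc n) v = (if children N v = {} then NLeaf (lbl N v)
                     else NNode (image_mset (nl N n) (mset_set (children N v))))"

definition nested_label :: "('v, 's) pnet \<Rightarrow> 'v \<Rightarrow> 's nlabel" where
  "nested_label N v = nl N (card (verts N)) v"

definition Upsilon :: "('v, 's) pnet \<Rightarrow> 's nlabel multiset" where
  "Upsilon N = image_mset (nested_label N) (mset_set (verts N))"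

definition net_iso :: "('v, 's) pnet \<Rightarrow> ('w, 's) pnet \<Rightarrow> bool" where
  "net_iso N1 N2 \<longleftrightarrow> (\<exists>f. bij_betw f (verts N1) (verts N2) \<and>
     (\<forall>u \<in> verts N1. \<forall>v \<in> verts N1. (u, v) \<in> arcs N1 \<longleftrightarrow> (f u, f v) \<in> arcs N2) \<and>
     (\<forall>v \<in> leaves N1. lbl N2 (f v) = lbl N1 v))"

definition msymdiff :: "'a multiset \<Rightarrow> 'a multiset \<Rightarrow> 'a multiset" where
  "msymdiff M1 M2 = (M1 - M2) + (M2 - M1)"

definition mdist :: "('v, 's) pnet \<Rightarrow> ('w, 's) pnet \<Rightarrow> real" where
  "mdist N1 N2 = real (size (msymdiff (Upsilon N1) (Upsilon N2))) / 2"

definition in_class :: "bool \<Rightarrow> ('v, 's) pnet \<Rightarrow> bool" where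
  "in_class b N \<longleftrightarrow> (if b then tree_child N
                       else semi_binary N \<and> time_consistent N \<and> tree_sibling N)"

end

theory Submission
  imports Defs
begin

definition D :: "('v, 's) pnet \<Rightarrow> 'v \<Rightarrow> 'v set" where
  "D N v = {w. (v, w) \<in> (arcs N)\<^sup>+}"

lemma pn_fin: "phylo_net S N \<Longrightarrow> finite (verts N)" by (simp add: phylo_net_def)
lemma pn_sub: "phylo_net S N \<Longrightarrow> arcs N \<subseteq> verts N \<times> verts N" by (simp add: phylo_net_def)
lemma pn_acyc: "phylo_net S N \<Longrightarrow> (v, v) \<notin> (arcs N)\<^sup>+" by (simp add: phylo_net_def)

lemma D_sub: assumes "phylo_net S N" shows "D N v \<subseteq> verts N"
proof -
  have "(arcs N)\<^sup>+ \<subseteq> verts N \<times> verts N" using trancl_subset_Sigma[OF pn_sub[OF assms]] .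
  then show ?thesis unfolding D_def by auto
qed

lemma D_fin: "phylo_net S N \<Longrightarrow> finite (D N v)"
  using D_sub pn_fin finite_subset by metis

lemma ch_sub: "phylo_net S N \<Longrightarrow> children N v \<subseteq> verts N"
  using pn_sub unfolding children_def by blast

lemma ch_fin: "phylo_net S N \<Longrightarrow> finite (children N v)"
  using ch_sub pn_fin finite_subset by metis

lemma par_sub: "phylo_net S N \<Longrightarrow> parents N v \<subseteq> verts N"
  using pn_sub unfolding parents_def by blast

lemma par_fin: "phylo_net S N \<Longrightarrow> finite (parents N v)"
  using par_sub pn_fin finite_subset by metis

lemma ch_D: assumes "phylo_net S N" "(v, c) \<in> arcs N"
  shows "card (D N c) < card (D N v)"
proof -
  have "D N c \<subseteq> D N v" unfolding D_def using assms(2) trancl_into_trancl2 by fastforce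
  moreover have "c \<in> D N v" unfolding D_def using assms(2) by auto
  moreover have "c \<notin> D N c" unfolding D_def using pn_acyc[OF assms(1)] by auto
  ultimately have "D N c \<subset> D N v" by blast
  then show ?thesis using psubset_card_mono D_fin[OF assms(1)] by blast
qed

lemma nl_stable:
  "phylo_net S N \<Longrightarrow> card (D N v) \<le> n \<Longrightarrow> card (D N v) \<le> m \<Longrightarrow> nl N n v = nl N m v"
proof (induction "card (D N v)" arbitrary: v n m rule: less_induct)
  case less
  show ?case
  proof (cases "children N v = {}")
    case True then show ?thesis by (cases n; cases m) simp_all
  next
    case False
    then obtain c where c: "(v, c) \<in> arcs N" by (auto simp: children_def)
    then have "card (D N v) > 0" using ch_D[OF less(2)] by force
    then obtain n' m' where nm: "n = Suc n'" "m = Suc m'" using less(3,4)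
      by (cases n; cases m) auto
    have "\<forall>c \<in> children N v. nl N n' c = nl N m' c"
    proof
      fix c assume "c \<in> children N v"
      then have "card (D N c) < card (D N v)" using ch_D[OF less(2)] by (auto simp: children_def)
      then show "nl N n' c = nl N m' c" using less nm by simp
    qed
    then have "image_mset (nl N n') (mset_set (children N v))
             = image_mset (nl N m') (mset_set (children N v))"
      using ch_fin[OF less(2), of v] by (intro image_mset_cong) simp
    then show ?thesis using nm False by simp
  qed
qed

lemma nested_label_rec:
  assumes "phylo_net S N"
  shows "nested_label N v = (if children N v = {} then NLeaf (lbl N v)
           else NNode (image_mset (nested_label N) (mset_set (children N v))))"
proof (cases "children N v = {}")
  case True then show ?thesis unfolding nested_label_def by (cases "card (verts N)") simp_all
next
  case False
  then obtain c where c: "(v, c) \<in> arcs N" by (auto simp: children_def)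
  then have pos: "card (D N v) > 0" using ch_D[OF assms] by force
  have le: "card (D N v) \<le> card (verts N)" using card_mono[OF pn_fin[OF assms] D_sub[OF assms]] .
  then obtain k where k: "card (verts N) = Suc k" using pos by (cases "card (verts N)") auto
  have "\<forall>c \<in> children N v. nl N k c = nl N (card (verts N)) c"
  proof
    fix c assume "c \<in> children N v"
    then have "card (D N c) < card (D N v)" using ch_D[OF assms] by (auto simp: children_def)
    then show "nl N k c = nl N (card (verts N)) c"
      using nl_stable[OF assms, of c k "card (verts N)"] le k by simp
  qed
  then have "image_mset (nl N k) (mset_set (children N v))
           = image_mset (nested_label N) (mset_set (children N v))"
    unfolding nested_label_def using ch_fin[OF assms, of v] by (intro image_mset_cong) simp
  then show ?thesis using False k unfolding nested_label_def by simp
qed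

lemma label_inj:
  "phylo_net S N \<Longrightarrow> in_class b N \<Longrightarrow> u \<in> verts N \<Longrightarrow> v \<in> verts N
   \<Longrightarrow> nested_label N u = nested_label N v \<Longrightarrow> u = v"
proof (induction "card (D N u)" arbitrary: u v rule: less_induct)
  case less
  note pn = less(2)
  note rec = nested_label_rec[OF pn]
  show ?case
  proof (cases "children N u = {}")
    case True
    then have "children N v = {}" "lbl N u = lbl N v" using less(6) rec[of u] rec[of v]
      by (auto split: if_splits)
    then have "u \<in> leaves N" "v \<in> leaves N" "lbl N u = lbl N v"
      using True less(4,5) by (auto simp: leaves_def)
    then show ?thesis using pn unfolding phylo_net_def bij_betw_def inj_on_def by blast
  next
    case False
    then have Fv: "children N v \<noteq> {}" using less(6) rec[of u] rec[of v]
      by (auto split: if_splits)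
    have "image_mset (nested_label N) (mset_set (children N u))
        = image_mset (nested_label N) (mset_set (children N v))"
      using less(6) rec[of u] rec[of v] False Fv by auto
    then have img: "nested_label N ` children N u = nested_label N ` children N v"
      by (metis ch_fin[OF pn] finite_set_mset_mset_set set_image_mset)
    have C: "children N u = children N v"
    proof
      show "children N u \<subseteq> children N v"
      proof
        fix c assume c: "c \<in> children N u"
        then obtain d where d: "d \<in> children N v" "nested_label N c = nested_label N d"
          using img by (metis imageE imageI)
        have "card (D N c) < card (D N u)" using c ch_D[OF pn] by (auto simp: children_def)
        then have "c = d" using less(1)[OF _ pn less(3)] d c ch_sub[OF pn] by blast
        then show "c \<in> children N v" using d by simp
      qed
    next
      show "children N v \<subseteq> children N u"
      proof
        fix d assume d: "d \<in> children N v"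
        then obtain c where c: "c \<in> children N u" "nested_label N d = nested_label N c"
          using img by (metis imageE imageI)
        have "card (D N c) < card (D N u)" using c ch_D[OF pn] by (auto simp: children_def)
        moreover have "c \<in> verts N" "d \<in> verts N" using d c ch_sub[OF pn] by blast+
        ultimately have "c = d" using less(1)[OF _ pn less(3), of c d] c(2) by simp
        then show "d \<in> children N u" using c by simp
      qed
    qed
    show ?thesis
    proof (rule ccontr)
      assume ne: "u \<noteq> v"
      have nt: "\<not> tree_node N c" if "c \<in> children N u" for c
      proof -
        have "{u, v} \<subseteq> parents N c" using that C by (auto simp: children_def parents_def)
        then have "card {u, v} \<le> card (parents N c)" using card_mono par_fin[OF pn] by blast
        then show ?thesis using ne by (simp add: tree_node_def)
      qed
      show False
      proof (cases b)
        case True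
        then have "tree_child N" using less(3) by (simp add: in_class_def)
        moreover have "u \<notin> leaves N" using False by (simp add: leaves_def)
        ultimately show False using nt less(4) by (auto simp: tree_child_def)
      next
        case bF: False
        then have sb: "semi_binary N" and ts: "tree_sibling N" using less(3) by (auto simp: in_class_def)
        obtain h where h: "h \<in> children N u" using False by blast
        have hv: "h \<in> verts N" using h ch_sub[OF pn] by blast
        have sub: "{u, v} \<subseteq> parents N h" using h C by (auto simp: children_def parents_def)
        then have "card {u, v} \<le> card (parents N h)" using card_mono par_fin[OF pn] by blast
        then have hy: "hybrid_node N h" using ne by (simp add: hybrid_node_def)
        then have "card (parents N h) = 2" using sb hv by (simp add: semi_binary_def)
        then have P: "parents N h = {u, v}"
          using card_subset_eq[OF par_fin[OF pn] sub] ne by simp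
        obtain p t where pt: "(p, h) \<in> arcs N" "(p, t) \<in> arcs N" "tree_node N t"
          using ts hy hv unfolding tree_sibling_def by blast
        then have "p \<in> {u, v}" using P by (auto simp: parents_def)
        then have "t \<in> children N u" using pt C by (auto simp: children_def)
        then show False using nt pt by blast
      qed
    qed
  qed
qed

lemma arc_iff:
  assumes pn: "phylo_net S N" and inj: "inj_on (nested_label N) (verts N)"
    and u: "u \<in> verts N" and w: "w \<in> verts N"
  shows "(u, w) \<in> arcs N \<longleftrightarrow> (\<exists>M. nested_label N u = NNode M \<and> nested_label N w \<in># M)"
proof (cases "children N u = {}")
  case True then show ?thesis using nested_label_rec[OF pn, of u] by (auto simp: children_def)
next
  case False
  have "nested_label N w \<in> nested_label N ` children N u \<longleftrightarrow> w \<in> children N u"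
    using inj w ch_sub[OF pn, of u] by (auto simp: inj_on_def)
  then show ?thesis using nested_label_rec[OF pn, of u] False ch_fin[OF pn, of u]
    by (auto simp: children_def)
qed

lemma leaf_label:
  assumes pn: "phylo_net S N" and "v \<in> leaves N"
  shows "nested_label N v = NLeaf (lbl N v)"
  using assms nested_label_rec[OF pn, of v] by (simp add: leaves_def)

lemma leaf_label2:
  assumes pn: "phylo_net S N" and "nested_label N v = NLeaf s" and "v \<in> verts N"
  shows "v \<in> leaves N \<and> lbl N v = s"
  using assms nested_label_rec[OF pn, of v] by (auto simp: leaves_def split: if_splits)

lemma set_Ups: "phylo_net S N \<Longrightarrow> set_mset (Upsilon N) = nested_label N ` verts N"
  by (simp add: Upsilon_def pn_fin)

lemma main_iso:
  fixes N1 :: "('v1, 's) pnet" and N2 :: "('v2, 's) pnet"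
  assumes p1: "phylo_net S N1" and p2: "phylo_net S N2"
    and c1: "in_class b N1" and c2: "in_class b N2"
    and U: "Upsilon N1 = Upsilon N2"
  shows "net_iso N1 N2"
proof -
  let ?l1 = "nested_label N1" and ?l2 = "nested_label N2"
  have i1: "inj_on ?l1 (verts N1)" using label_inj[OF p1 c1] by (auto simp: inj_on_def)
  have i2: "inj_on ?l2 (verts N2)" using label_inj[OF p2 c2] by (auto simp: inj_on_def)
  have im: "?l1 ` verts N1 = ?l2 ` verts N2" using set_Ups[OF p1] set_Ups[OF p2] U by simp
  define f where "f = inv_into (verts N2) ?l2 \<circ> ?l1"
  have b1: "bij_betw ?l1 (verts N1) (?l2 ` verts N2)" using i1 im by (simp add: bij_betw_def)
  have b2: "bij_betw (inv_into (verts N2) ?l2) (?l2 ` verts N2) (verts N2)"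
    using bij_betw_inv_into[of ?l2 "verts N2" "?l2 ` verts N2"] i2 by (simp add: bij_betw_def)
  have bij: "bij_betw f (verts N1) (verts N2)" unfolding f_def using bij_betw_trans[OF b1 b2] .
  have fl: "?l2 (f v) = ?l1 v" if "v \<in> verts N1" for v
  proof -
    have "?l1 v \<in> ?l2 ` verts N2" using that im by blast
    then show ?thesis unfolding f_def by (simp add: f_inv_into_f)
  qed
  have fv: "f v \<in> verts N2" if "v \<in> verts N1" for v using bij that bij_betwE by blast
  have arcs: "\<forall>u \<in> verts N1. \<forall>v \<in> verts N1. (u, v) \<in> arcs N1 \<longleftrightarrow> (f u, f v) \<in> arcs N2"
    using arc_iff[OF p1 i1] arc_iff[OF p2 i2] fl fv by simp
  have lv: "\<forall>v \<in> leaves N1. lbl N2 (f v) = lbl N1 v"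
  proof
    fix v assume v: "v \<in> leaves N1"
    then have vv: "v \<in> verts N1" by (simp add: leaves_def)
    have "?l2 (f v) = NLeaf (lbl N1 v)" using fl[OF vv] leaf_label[OF p1 v] by simp
    then show "lbl N2 (f v) = lbl N1 v" using leaf_label2[OF p2 _ fv[OF vv]] by blast
  qed
  show ?thesis unfolding net_iso_def using bij arcs lv by blast
qed

lemma iso_Ups:
  fixes N1 :: "('v1, 's) pnet" and N2 :: "('v2, 's) pnet"
  assumes p1: "phylo_net S N1" and p2: "phylo_net S N2" and iso: "net_iso N1 N2"
  shows "Upsilon N1 = Upsilon N2"
proof -
  obtain f where bij: "bij_betw f (verts N1) (verts N2)"
    and ar: "\<forall>u \<in> verts N1. \<forall>v \<in> verts N1. (u, v) \<in> arcs N1 \<longleftrightarrow> (f u, f v) \<in> arcs N2"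
    and lb: "\<forall>v \<in> leaves N1. lbl N2 (f v) = lbl N1 v"
    using iso unfolding net_iso_def by blast
  have inj: "inj_on f (verts N1)" using bij bij_betw_def by blast
  have chf: "children N2 (f v) = f ` children N1 v" if "v \<in> verts N1" for v
  proof
    show "children N2 (f v) \<subseteq> f ` children N1 v"
    proof
      fix w assume w: "w \<in> children N2 (f v)"
      then have "w \<in> verts N2" using ch_sub[OF p2] by blast
      then obtain x where x: "x \<in> verts N1" "w = f x" using bij by (metis bij_betw_imp_surj_on imageE)
      then show "w \<in> f ` children N1 v" using ar that w by (auto simp: children_def)
    qed
  next
    show "f ` children N1 v \<subseteq> children N2 (f v)"
      using ar that ch_sub[OF p1, of v] by (auto simp: children_def)
  qed
  have nlf: "\<forall>v \<in> verts N1. nl N2 n (f v) = nl N1 n v" for n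
  proof (induction n)
    case 0
    show ?case
    proof
      fix v assume v: "v \<in> verts N1"
      show "nl N2 0 (f v) = nl N1 0 v"
        using chf[OF v] lb v by (auto simp: leaves_def)
    qed
  next
    case (Suc n)
    show ?case
    proof
      fix v assume v: "v \<in> verts N1"
      have injc: "inj_on f (children N1 v)" using inj ch_sub[OF p1, of v] inj_on_subset by blast
      have "image_mset (nl N2 n) (mset_set (children N2 (f v)))
          = image_mset (nl N2 n) (image_mset f (mset_set (children N1 v)))"
        using chf[OF v] image_mset_mset_set[OF injc] by simp
      also have "\<dots> = image_mset (nl N1 n) (mset_set (children N1 v))"
        unfolding multiset.map_comp
        using Suc ch_sub[OF p1, of v] ch_fin[OF p1, of v] by (intro image_mset_cong) auto
      finally show "nl N2 (Suc n) (f v) = nl N1 (Suc n) v"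
        using chf[OF v] lb v by (auto simp: leaves_def)
    qed
  qed
  have card: "card (verts N1) = card (verts N2)" using bij bij_betw_same_card by blast
  have "Upsilon N2 = image_mset (nested_label N2) (mset_set (f ` verts N1))"
    unfolding Upsilon_def using bij bij_betw_imp_surj_on by metis
  also have "\<dots> = image_mset (nested_label N2) (image_mset f (mset_set (verts N1)))"
    using image_mset_mset_set[OF inj] by simp
  also have "\<dots> = Upsilon N1"
    unfolding Upsilon_def multiset.map_comp nested_label_def
    using nlf card pn_fin[OF p1] by (intro image_mset_cong) auto
  finally show ?thesis by simp
qed

lemma msym_zero: "size (msymdiff A B) = 0 \<longleftrightarrow> A = B"
proof
  assume "size (msymdiff A B) = 0"
  then have "A - B = {#}" "B - A = {#}" unfolding msymdiff_def by auto
  then have "A \<subseteq># B" "B \<subseteq># A" by (simp_all add: Diff_eq_empty_iff_mset)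
  then show "A = B" by (rule subset_mset.antisym)
qed (simp add: msymdiff_def)

lemma msym_tri: "size (msymdiff A C) \<le> size (msymdiff A B) + size (msymdiff B C)"
proof -
  have "msymdiff A C \<subseteq># msymdiff A B + msymdiff B C"
    by (rule mset_subset_eqI) (simp add: msymdiff_def)
  then show ?thesis using size_mset_mono by fastforce
qed

theorem corollary3:
  fixes S :: "'s set" and b :: bool
    and N1 :: "('v1, 's) pnet" and N2 :: "('v2, 's) pnet" and N3 :: "('v3, 's) pnet"
  assumes "phylo_net S N1" and "phylo_net S N2" and "phylo_net S N3"
    and "in_class b N1" and "in_class b N2" and "in_class b N3"
  shows "(Upsilon N1 = Upsilon N2 \<longrightarrow> net_iso N1 N2)
         \<and> mdist N1 N2 \<ge> 0
         \<and> (mdist N1 N2 = 0 \<longleftrightarrow> net_iso N1 N2)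
         \<and> mdist N1 N2 = mdist N2 N1
         \<and> mdist N1 N3 \<le> mdist N1 N2 + mdist N2 N3"
proof -
  have A: "Upsilon N1 = Upsilon N2 \<longrightarrow> net_iso N1 N2" using main_iso assms by blast
  have B: "mdist N1 N2 = 0 \<longleftrightarrow> net_iso N1 N2"
    using A iso_Ups[OF assms(1,2)] msym_zero unfolding mdist_def by auto
  have C: "mdist N1 N2 = mdist N2 N1"
    unfolding mdist_def msymdiff_def by (simp add: add.commute)
  have "real (size (msymdiff (Upsilon N1) (Upsilon N3)))
     \<le> real (size (msymdiff (Upsilon N1) (Upsilon N2))) + real (size (msymdiff (Upsilon N2) (Upsilon N3)))"
    using msym_tri by (metis of_nat_add of_nat_le_iff)
  then have D: "mdist N1 N3 \<le> mdist N1 N2 + mdist N2 N3" unfolding mdist_def by simp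
  have E: "mdist N1 N2 \<ge> 0" unfolding mdist_def by simp
  show ?thesis using A B C D E by blast
qed

end
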